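(* Suppose $R$ carries an $A$-grading and an $A'$-grading and $N$ carries a $B$-grading and a $B'$-grading (each pair satisfying the standing assumptions), and that the $(A,B)$-gradings refine the $(A',B')$-gradings. If $X=\{m_1,\dots,m_n\}\subseteq M$ is a Macaulay basis of $M$ with respect to the $(A,B)$-gradings and $X$ generates $M$, then $X$ is also a Macaulay basis of $M$ with respect to the $(A',B')$-gradings.
   Context: Standing assumptions on a grading pair $(A,B)$: $\mathbf{k}$ is a field; $(A,+,0)$ is a finitely generated cancellative commutative monoid with a well-ordered total order such that $0<a$ for $a\ne0$ and $a\le a'\Rightarrow a+c\le a'+c$; $R=\bigoplus_{a\in A}R_a$ is a commutative Noetherian $\mathbf{k}$-algebra with $R_aR_{a'}\subseteq R_{a+a'}$; $B$ is a well-ordered totally ordered set with an action $(a,b)\mapsto a\cdot b$ of $A$ with $0\cdot b=b$, $(a+a')\cdot b=a\cdot(a'\cdot b)$, monotone and cancellative in each argument; $N=\bigoplus_{b\in B}N_b$ is a Noetherian $R$-module with $R_aN_b\subseteq N_{a\cdot b}$; $M\subseteq N$ is an $R$-submodule. For $m=\sum_bm_b\ne0$: $\deg m=\max\{b:m_b\ne0\}$, $\operatorname{lf}(m)=m_{\deg m}$. A finite set $\{m_1,\dots,m_n\}$ of nonzero elements of $M$ is a Macaulay basis of $M$ (w.r.t. the given gradings) if the $R$-submodule generated by $\{\operatorname{lf}(p):0\ne p\in M\}$ equals that generated by $\operatorname{lf}(m_1),\dots,\operatorname{lf}(m_n)$. Refinement: the $(A,B)$-gradings refine the $(A',B')$-gradings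 if there is an order-preserving monoid homomorphism $f:A\to A'$ with $R_{a'}=\bigoplus_{a\in f^{-1}(a')}R_a$ for all $a'\in A'$, and an order-preserving map $g:B\to B'$ with $N_{b'}=\bigoplus_{b\in g^{-1}(b')}N_b$ for all $b'\in B'$ and $f(a)\cdot g(b)=g(a\cdot b)$ for all $a\in A$, $b\in B$. *)

theory Defs
  imports Main "HOL.Modules"
begin

definition is_dsum :: "('i \<Rightarrow> 'v::ab_group_add set) \<Rightarrow> bool" where
  "is_dsum G \<longleftrightarrow>
     (\<forall>i. 0 \<in> G i \<and> (\<forall>x\<in>G i. \<forall>y\<in>G i. x + y \<in> G i \<and> - x \<in> G i)) \<and>
     (\<forall>x. \<exists>!c. finite {i. c i \<noteq> 0} \<and> (\<forall>i. c i \<in> G i) \<and> x = (\<Sum>i | c i \<noteq> 0. c i))"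

definition comp :: "('i \<Rightarrow> 'v::ab_group_add set) \<Rightarrow> 'v \<Rightarrow> 'i \<Rightarrow> 'v" where
  "comp G x = (THE c. finite {i. c i \<noteq> 0} \<and> (\<forall>i. c i \<in> G i) \<and> x = (\<Sum>i | c i \<noteq> 0. c i))"

definition gdeg :: "('i::linorder \<Rightarrow> 'v::ab_group_add set) \<Rightarrow> 'v \<Rightarrow> 'i" where
  "gdeg G x = Max {i. comp G x i \<noteq> 0}"

definition lf :: "('i::linorder \<Rightarrow> 'v::ab_group_add set) \<Rightarrow> 'v \<Rightarrow> 'v" where
  "lf G x = comp G x (gdeg G x)"

definition dsum_of :: "('i \<Rightarrow> 'v::ab_group_add set) \<Rightarrow> 'i set \<Rightarrow> 'v set" where
  "dsum_of G I = {x. \<exists>c S. finite S \<and> S \<subseteq> I \<and> (\<forall>i\<in>S. c i \<in> G i) \<and> x = sum c S}"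

definition good_monoid :: "'a::{comm_monoid_add, wellorder} itself \<Rightarrow> bool" where
  "good_monoid _ \<longleftrightarrow>
     (\<exists>S::'a set. finite S \<and> (\<forall>a. \<exists>xs. set xs \<subseteq> S \<and> a = sum_list xs)) \<and>
     (\<forall>a b c::'a. a + c = b + c \<longrightarrow> a = b) \<and>
     (\<forall>a::'a. a \<noteq> 0 \<longrightarrow> 0 < a) \<and>
     (\<forall>a b c::'a. a \<le> b \<longrightarrow> a + c \<le> b + c)"

definition good_action :: "('a::{comm_monoid_add, wellorder} \<Rightarrow> 'b::wellorder \<Rightarrow> 'b) \<Rightarrow> bool" where
  "good_action act \<longleftrightarrow>
     (\<forall>b. act 0 b = b) \<and>
     (\<forall>a a' b. act (a + a') b = act a (act a' b)) \<and>
     (\<forall>a a' b. a \<le> a' \<longrightarrow> act a b \<le> act a' b) \<and>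
     (\<forall>a b b'. b \<le> b' \<longrightarrow> act a b \<le> act a b') \<and>
     (\<forall>a a' b. act a b = act a' b \<longrightarrow> a = a') \<and>
     (\<forall>a b b'. act a b = act a b' \<longrightarrow> b = b')"

definition k_algebra :: "('k::field \<Rightarrow> 'r::comm_ring_1) \<Rightarrow> bool" where
  "k_algebra \<iota> \<longleftrightarrow> \<iota> 1 = 1 \<and> (\<forall>x y. \<iota> (x + y) = \<iota> x + \<iota> y) \<and> (\<forall>x y. \<iota> (x * y) = \<iota> x * \<iota> y)"

definition noetherian_module :: "('r::comm_ring_1 \<Rightarrow> 'n::ab_group_add \<Rightarrow> 'n) \<Rightarrow> bool" where
  "noetherian_module smul \<longleftrightarrow>
     module smul \<and>
     (\<forall>M. module.subspace smul M \<longrightarrow> (\<exists>F. finite F \<and> F \<subseteq> M \<and> module.span smul F = M))"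

definition noetherian_ring :: "'r::comm_ring_1 itself \<Rightarrow> bool" where
  "noetherian_ring _ \<longleftrightarrow> noetherian_module ((*) :: 'r \<Rightarrow> 'r \<Rightarrow> 'r)"

definition grading_pair ::
  "('k::field \<Rightarrow> 'r::comm_ring_1) \<Rightarrow> ('r \<Rightarrow> 'n::ab_group_add \<Rightarrow> 'n) \<Rightarrow>
   ('a::{comm_monoid_add, wellorder} \<Rightarrow> 'r set) \<Rightarrow> ('a \<Rightarrow> 'b::wellorder \<Rightarrow> 'b) \<Rightarrow>
   ('b \<Rightarrow> 'n set) \<Rightarrow> bool" where
  "grading_pair \<iota> smul RA act NB \<longleftrightarrow>
     k_algebra \<iota> \<and> noetherian_ring TYPE('r) \<and> noetherian_module smul \<and>
     good_monoid TYPE('a) \<and> good_action act \<and>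
     is_dsum RA \<and> (\<forall>a c x. x \<in> RA a \<longrightarrow> \<iota> c * x \<in> RA a) \<and>
     (\<forall>a a' x y. x \<in> RA a \<longrightarrow> y \<in> RA a' \<longrightarrow> x * y \<in> RA (a + a')) \<and>
     is_dsum NB \<and>
     (\<forall>a b r m. r \<in> RA a \<longrightarrow> m \<in> NB b \<longrightarrow> smul r m \<in> NB (act a b))"

definition refines ::
  "('a::{comm_monoid_add, wellorder} \<Rightarrow> 'r::comm_ring_1 set) \<Rightarrow> ('a \<Rightarrow> 'b::wellorder \<Rightarrow> 'b) \<Rightarrow>
   ('b \<Rightarrow> 'n::ab_group_add set) \<Rightarrow>
   ('a2::{comm_monoid_add, wellorder} \<Rightarrow> 'r set) \<Rightarrow> ('a2 \<Rightarrow> 'b2::wellorder \<Rightarrow> 'b2) \<Rightarrow>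
   ('b2 \<Rightarrow> 'n set) \<Rightarrow> bool" where
  "refines RA act NB RA' act' NB' \<longleftrightarrow>
     (\<exists>f g. f 0 = 0 \<and> (\<forall>a a'. f (a + a') = f a + f a') \<and> mono f \<and>
            (\<forall>a'. RA' a' = dsum_of RA (f -` {a'})) \<and>
            mono g \<and> (\<forall>b'. NB' b' = dsum_of NB (g -` {b'})) \<and>
            (\<forall>a b. act' (f a) (g b) = g (act a b)))"

definition macaulay_basis ::
  "('r::comm_ring_1 \<Rightarrow> 'n::ab_group_add \<Rightarrow> 'n) \<Rightarrow> ('b::wellorder \<Rightarrow> 'n set) \<Rightarrow> 'n set \<Rightarrow> 'n set \<Rightarrow> bool" where
  "macaulay_basis smul NB M X \<longleftrightarrow>
     finite X \<and> X \<subseteq> M \<and> 0 \<notin> X \<and>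
     module.span smul {lf NB p | p. p \<in> M \<and> p \<noteq> 0} = module.span smul (lf NB ` X)"

end

theory Submission
  imports Defs
begin

lemma comp_props:
  assumes "is_dsum G"
  shows "finite {i. comp G x i \<noteq> 0}" "comp G x i \<in> G i"
    "x = (\<Sum>i | comp G x i \<noteq> 0. comp G x i)"
proof -
  let ?P = "\<lambda>c. finite {i. c i \<noteq> 0} \<and> (\<forall>i. c i \<in> G i) \<and> x = (\<Sum>i | c i \<noteq> 0. c i)"
  from assms have "\<exists>!c. ?P c" unfolding is_dsum_def by blast
  hence "?P (comp G x)" unfolding comp_def by (rule theI')
  thus "finite {i. comp G x i \<noteq> 0}" "comp G x i \<in> G i"
    "x = (\<Sum>i | comp G x i \<noteq> 0. comp G x i)" by auto
qed

lemma dsum_zero: "is_dsum G \<Longrightarrow> 0 \<in> G i"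
  unfolding is_dsum_def by blast
lemma dsum_add: "is_dsum G \<Longrightarrow> x \<in> G i \<Longrightarrow> y \<in> G i \<Longrightarrow> x + y \<in> G i"
  unfolding is_dsum_def by blast
lemma dsum_neg: "is_dsum G \<Longrightarrow> x \<in> G i \<Longrightarrow> - x \<in> G i"
  unfolding is_dsum_def by blast

lemma comp_unique:
  assumes d: "is_dsum G" and S: "finite S" and c: "\<forall>i. c i \<in> G i"
    and out: "\<forall>i. i \<notin> S \<longrightarrow> c i = 0" and x: "x = sum c S"
  shows "comp G x = c"
proof -
  let ?P = "\<lambda>c. finite {i. c i \<noteq> 0} \<and> (\<forall>i. c i \<in> G i) \<and> x = (\<Sum>i | c i \<noteq> 0. c i)"
  have sub: "{i. c i \<noteq> 0} \<subseteq> S" using out by auto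
  have fin: "finite {i. c i \<noteq> 0}" using finite_subset[OF sub S] .
  have "sum c S = (\<Sum>i | c i \<noteq> 0. c i)"
    by (rule sum.mono_neutral_right[OF S sub]) auto
  hence "?P c" using fin c x by simp
  moreover from d have "\<exists>!c. ?P c" unfolding is_dsum_def by blast
  ultimately show ?thesis unfolding comp_def by (rule the1_equality[rotated])
qed

lemma comp_expand:
  assumes d: "is_dsum G" and S: "finite S" and sub: "{i. comp G x i \<noteq> 0} \<subseteq> S"
  shows "x = (\<Sum>i\<in>S. comp G x i)"
proof -
  have "(\<Sum>i\<in>S. comp G x i) = (\<Sum>i | comp G x i \<noteq> 0. comp G x i)"
    by (rule sum.mono_neutral_right[OF S sub]) auto
  thus ?thesis using comp_props(3)[OF d, of x] by simp
qed

lemma comp_zero: "is_dsum G \<Longrightarrow> comp G 0 i = 0"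
  using comp_unique[of G "{}" "\<lambda>i. 0" 0] dsum_zero by fastforce

lemma comp_hom:
  assumes d: "is_dsum G" and x: "x \<in> G j"
  shows "comp G x = (\<lambda>i. if i = j then x else 0)"
  by (rule comp_unique[OF d, of "{j}"]) (auto simp: x dsum_zero[OF d])

lemma comp_add:
  assumes d: "is_dsum G"
  shows "comp G (x + y) i = comp G x i + comp G y i"
proof -
  let ?S = "{i. comp G x i \<noteq> 0} \<union> {i. comp G y i \<noteq> 0}"
  have S: "finite ?S" using comp_props(1)[OF d] by auto
  have "comp G (x + y) = (\<lambda>i. comp G x i + comp G y i)"
  proof (rule comp_unique[OF d S])
    show "\<forall>i. comp G x i + comp G y i \<in> G i"
      using comp_props(2)[OF d] dsum_add[OF d] by blast
    show "\<forall>i. i \<notin> ?S \<longrightarrow> comp G x i + comp G y i = 0" by auto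
    show "x + y = (\<Sum>i\<in>?S. comp G x i + comp G y i)"
      using comp_expand[OF d S, of x] comp_expand[OF d S, of y]
      by (simp add: sum.distrib)
  qed
  thus ?thesis by simp
qed

lemma comp_neg:
  assumes d: "is_dsum G"
  shows "comp G (- x) i = - comp G x i"
proof -
  let ?S = "{i. comp G x i \<noteq> 0}"
  have S: "finite ?S" using comp_props(1)[OF d] by auto
  have "comp G (- x) = (\<lambda>i. - comp G x i)"
  proof (rule comp_unique[OF d S])
    show "\<forall>i. - comp G x i \<in> G i"
      using comp_props(2)[OF d] dsum_neg[OF d] by blast
    show "\<forall>i. i \<notin> ?S \<longrightarrow> - comp G x i = 0" by auto
    show "- x = (\<Sum>i\<in>?S. - comp G x i)"
      using comp_expand[OF d S, of x] by (simp add: sum_negf)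
  qed
  thus ?thesis by simp
qed

lemma comp_diff:
  assumes d: "is_dsum G"
  shows "comp G (x - y) i = comp G x i - comp G y i"
  using comp_add[OF d, of x "- y" i] comp_neg[OF d, of y i] by simp

lemma comp_sum:
  assumes d: "is_dsum G" and T: "finite T"
  shows "comp G (\<Sum>t\<in>T. h t) i = (\<Sum>t\<in>T. comp G (h t) i)"
  using T by (induction T rule: finite_induct) (auto simp: comp_zero[OF d] comp_add[OF d])

lemma gdeg_ge:
  assumes d: "is_dsum G" and "comp G x i \<noteq> 0"
  shows "i \<le> gdeg G x"
  unfolding gdeg_def using assms comp_props(1)[OF d, of x] by (intro Max_ge) auto

lemma gdeg_nz:
  assumes d: "is_dsum G" and x: "x \<noteq> 0"
  shows "comp G x (gdeg G x) \<noteq> 0"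
proof -
  have ne: "{i. comp G x i \<noteq> 0} \<noteq> {}"
  proof
    assume "{i. comp G x i \<noteq> 0} = {}"
    hence "x = 0" using comp_props(3)[OF d, of x] by simp
    thus False using x by simp
  qed
  show ?thesis unfolding gdeg_def using Max_in[OF comp_props(1)[OF d, of x] ne] by simp
qed


lemma comp_smul_gen:
  assumes m: "module smul" and d: "is_dsum G"
    and hom: "\<forall>a b r m. r \<in> H a \<longrightarrow> m \<in> G b \<longrightarrow> smul r m \<in> G (act a b)"
    and r: "r \<in> H a"
  shows "comp G (smul r m) k =
     (\<Sum>j | comp G m j \<noteq> 0. if k = act a j then smul r (comp G m j) else 0)"
proof -
  let ?S = "{j. comp G m j \<noteq> 0}"
  have S: "finite ?S" using comp_props(1)[OF d] .
  have "smul r m = smul r (\<Sum>j\<in>?S. comp G m j)"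
    using comp_expand[OF d S, of m] by simp
  also have "\<dots> = (\<Sum>j\<in>?S. smul r (comp G m j))"
    by (rule module.scale_sum_right[OF m])
  finally have "comp G (smul r m) k = comp G (\<Sum>j\<in>?S. smul r (comp G m j)) k" by simp
  also have "\<dots> = (\<Sum>j\<in>?S. comp G (smul r (comp G m j)) k)"
    by (rule comp_sum[OF d S])
  also have "\<dots> = (\<Sum>j\<in>?S. if k = act a j then smul r (comp G m j) else 0)"
  proof (rule sum.cong[OF refl])
    fix j
    have "smul r (comp G m j) \<in> G (act a j)"
      using hom r comp_props(2)[OF d] by blast
    thus "comp G (smul r (comp G m j)) k = (if k = act a j then smul r (comp G m j) else 0)"
      using comp_hom[OF d] by simp
  qed
  finally show ?thesis .
qed

lemma comp_smul:
  assumes m: "module smul" and d: "is_dsum G"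
    and hom: "\<forall>a b r m. r \<in> H a \<longrightarrow> m \<in> G b \<longrightarrow> smul r m \<in> G (act a b)"
    and canc: "\<forall>a b b'. act a b = act a b' \<longrightarrow> b = b'"
    and r: "r \<in> H a"
  shows "comp G (smul r m) (act a j) = smul r (comp G m j)"
proof -
  have "comp G (smul r m) (act a j) =
     (\<Sum>i | comp G m i \<noteq> 0. if i = j then smul r (comp G m i) else 0)"
    unfolding comp_smul_gen[OF m d hom r]
    by (rule sum.cong[OF refl]) (use canc in metis)
  also have "\<dots> = smul r (comp G m j)"
    using comp_props(1)[OF d, of m] by (simp add: module.scale_zero_right[OF m])
  finally show ?thesis .
qed

lemma comp_smul_out:
  assumes m: "module smul" and d: "is_dsum G"
    and hom: "\<forall>a b r m. r \<in> H a \<longrightarrow> m \<in> G b \<longrightarrow> smul r m \<in> G (act a b)"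
    and r: "r \<in> H a" and k: "k \<notin> range (act a)"
  shows "comp G (smul r m) k = 0"
  unfolding comp_smul_gen[OF m d hom r] using k by (intro sum.neutral) auto

lemma comp_smul_hom:
  assumes m: "module smul" and d: "is_dsum G" and dH: "is_dsum H"
    and hom: "\<forall>a b r m. r \<in> H a \<longrightarrow> m \<in> G b \<longrightarrow> smul r m \<in> G (act a b)"
    and y: "y \<in> G j"
  shows "comp G (smul r y) k = (\<Sum>a | comp H r a \<noteq> 0 \<and> act a j = k. smul (comp H r a) y)"
proof -
  let ?S = "{a. comp H r a \<noteq> 0}"
  have S: "finite ?S" using comp_props(1)[OF dH] .
  have "smul r y = smul (\<Sum>a\<in>?S. comp H r a) y"
    using comp_expand[OF dH S, of r] by simp
  also have "\<dots> = (\<Sum>a\<in>?S. smul (comp H r a) y)"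
    by (rule module.scale_sum_left[OF m])
  finally have "comp G (smul r y) k = comp G (\<Sum>a\<in>?S. smul (comp H r a) y) k" by simp
  also have "\<dots> = (\<Sum>a\<in>?S. comp G (smul (comp H r a) y) k)"
    by (rule comp_sum[OF d S])
  also have "\<dots> = (\<Sum>a\<in>?S. if act a j = k then smul (comp H r a) y else 0)"
  proof (rule sum.cong[OF refl])
    fix a
    have "smul (comp H r a) y \<in> G (act a j)"
      using hom y comp_props(2)[OF dH] by blast
    thus "comp G (smul (comp H r a) y) k = (if act a j = k then smul (comp H r a) y else 0)"
      using comp_hom[OF d] by auto
  qed
  also have "\<dots> = (\<Sum>a | comp H r a \<noteq> 0 \<and> act a j = k. smul (comp H r a) y)"
    using S by (simp add: sum.inter_filter[symmetric])
  finally show ?thesis .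
qed

lemma comp_refine:
  assumes d: "is_dsum G" and d': "is_dsum G'"
    and ref: "\<forall>b'. G' b' = dsum_of G (g -` {b'})"
  shows "comp G' x b' = (\<Sum>b | comp G x b \<noteq> 0 \<and> g b = b'. comp G x b)"
proof -
  let ?S = "{b. comp G x b \<noteq> 0}"
  have S: "finite ?S" using comp_props(1)[OF d] .
  let ?c = "\<lambda>b'. (\<Sum>b | comp G x b \<noteq> 0 \<and> g b = b'. comp G x b)"
  have fin: "finite {b. comp G x b \<noteq> 0 \<and> g b = b'}" for b'
    by (rule finite_subset[OF _ S]) auto
  have "comp G' x = ?c"
  proof (rule comp_unique[OF d' finite_imageI[OF S]])
    show "\<forall>i. ?c i \<in> G' i"
    proof
      fix i
      have "?c i \<in> dsum_of G (g -` {i})" unfolding dsum_of_def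
        using fin[of i] comp_props(2)[OF d] by blast
      thus "?c i \<in> G' i" using ref by simp
    qed
    show "\<forall>i. i \<notin> g ` ?S \<longrightarrow> ?c i = 0"
      by (auto intro!: sum.neutral)
    have "x = sum (comp G x) ?S" using comp_props(3)[OF d] by simp
    also have "\<dots> = (\<Sum>y\<in>g ` ?S. sum (comp G x) {b \<in> ?S. g b = y})"
      by (rule sum.image_gen[OF S])
    also have "\<dots> = sum ?c (g ` ?S)"
      by (rule sum.cong[OF refl]) (simp add: Collect_conj_eq)
    finally show "x = sum ?c (g ` ?S)" .
  qed
  thus ?thesis by simp
qed


lemma refine_ex:
  assumes d: "is_dsum G" and d': "is_dsum G'"
    and ref: "\<forall>b'. G' b' = dsum_of G (g -` {b'})"
    and nz: "comp G' x b' \<noteq> 0"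
  shows "\<exists>b. comp G x b \<noteq> 0 \<and> g b = b'"
proof (rule ccontr)
  assume "\<not> ?thesis"
  hence e: "{b. comp G x b \<noteq> 0 \<and> g b = b'} = {}" by auto
  have "comp G' x b' = 0" unfolding comp_refine[OF d d' ref, of x b'] e by simp
  thus False using nz by simp
qed

lemma refine_le:
  assumes d: "is_dsum G" and d': "is_dsum G'"
    and ref: "\<forall>b'. G' b' = dsum_of G (g -` {b'})" and mg: "mono g"
    and nz: "comp G' x b' \<noteq> 0"
  shows "b' \<le> g (gdeg G x)"
proof -
  obtain b where "comp G x b \<noteq> 0" "g b = b'" using refine_ex[OF d d' ref nz] by blast
  thus ?thesis using gdeg_ge[OF d] mg by (metis monoD)
qed

lemma refine_nz:
  assumes d: "is_dsum G" and d': "is_dsum G'"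
    and ref: "\<forall>b'. G' b' = dsum_of G (g -` {b'})" and x: "x \<noteq> 0"
  shows "comp G' x (g (gdeg G x)) \<noteq> 0"
proof
  let ?dd = "gdeg G x"
  let ?T = "{b. comp G x b \<noteq> 0 \<and> g b = g ?dd}"
  have T: "finite ?T" by (rule finite_subset[OF _ comp_props(1)[OF d, of x]]) auto
  assume "comp G' x (g ?dd) = 0"
  hence z: "(\<Sum>b\<in>?T. comp G x b) = 0" using comp_refine[OF d d' ref, of x] by simp
  have "comp G (\<Sum>b\<in>?T. comp G x b) ?dd = (\<Sum>b\<in>?T. comp G (comp G x b) ?dd)"
    by (rule comp_sum[OF d T])
  also have "\<dots> = (\<Sum>b\<in>?T. if ?dd = b then comp G x b else 0)"
    by (rule sum.cong[OF refl]) (simp add: comp_hom[OF d comp_props(2)[OF d]])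
  also have "\<dots> = comp G x ?dd" using T gdeg_nz[OF d x] by simp
  finally show False using z comp_zero[OF d] gdeg_nz[OF d x] by simp
qed

lemma refine_lf:
  assumes d: "is_dsum G" and d': "is_dsum G'"
    and ref: "\<forall>b'. G' b' = dsum_of G (g -` {b'})" and mg: "mono g" and x: "x \<noteq> 0"
  shows "lf G' x = comp G' x (g (gdeg G x))"
proof -
  have "gdeg G' x = g (gdeg G x)" unfolding gdeg_def[of G']
    using refine_nz[OF d d' ref x] refine_le[OF d d' ref mg] comp_props(1)[OF d', of x]
    by (intro Max_eqI) (auto simp: gdeg_def)
  thus ?thesis unfolding lf_def by simp
qed


theorem mainTheorem6:
  fixes \<iota> :: "'k::field \<Rightarrow> 'r::comm_ring_1"
    and smul :: "'r \<Rightarrow> 'n::ab_group_add \<Rightarrow> 'n"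
    and RA :: "'a::{comm_monoid_add, wellorder} \<Rightarrow> 'r set"
    and act :: "'a \<Rightarrow> 'b::wellorder \<Rightarrow> 'b"
    and NB :: "'b \<Rightarrow> 'n set"
    and RA' :: "'a2::{comm_monoid_add, wellorder} \<Rightarrow> 'r set"
    and act' :: "'a2 \<Rightarrow> 'b2::wellorder \<Rightarrow> 'b2"
    and NB' :: "'b2 \<Rightarrow> 'n set"
    and M X :: "'n set"
  assumes "grading_pair \<iota> smul RA act NB"
    and "grading_pair \<iota> smul RA' act' NB'"
    and "refines RA act NB RA' act' NB'"
    and "module.subspace smul M"
    and "macaulay_basis smul NB M X"
    and "module.span smul X = M"
  shows "macaulay_basis smul NB' M X"
proof -
  have mod: "module smul" and ga: "good_action act" and dRA: "is_dsum RA"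
    and hom: "\<forall>a b r m. r \<in> RA a \<longrightarrow> m \<in> NB b \<longrightarrow> smul r m \<in> NB (act a b)"
    and dNB: "is_dsum NB"
    using assms(1) unfolding grading_pair_def noetherian_module_def by auto
  have ga': "good_action act'" and dNB': "is_dsum NB'"
    and hom': "\<forall>a b r m. r \<in> RA' a \<longrightarrow> m \<in> NB' b \<longrightarrow> smul r m \<in> NB' (act' a b)"
    using assms(2) unfolding grading_pair_def by auto
  obtain f g where refRA: "\<forall>a'. RA' a' = dsum_of RA (f -` {a'})" and mg: "mono g"
    and refNB: "\<forall>b'. NB' b' = dsum_of NB (g -` {b'})"
    and compat: "\<forall>a b. act' (f a) (g b) = g (act a b)"
    using assms(3) unfolding refines_def by blast
  have canc: "\<forall>a b b'. act a b = act a b' \<longrightarrow> b = b'"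
    and monob: "\<forall>a b b'. b \<le> b' \<longrightarrow> act a b \<le> act a b'"
    using ga unfolding good_action_def by auto
  have canc': "\<forall>a b b'. act' a b = act' a b' \<longrightarrow> b = b'"
    using ga' unfolding good_action_def by auto
  have RAsub: "r \<in> RA' (f a)" if "r \<in> RA a" for r a
  proof -
    have "r \<in> dsum_of RA (f -` {f a})" unfolding dsum_of_def
      by (rule CollectI, rule exI[of _ "\<lambda>_. r"], rule exI[of _ "{a}"]) (simp add: that)
    thus ?thesis using refRA by simp
  qed
  have finX: "finite X" and XM: "X \<subseteq> M" and X0: "0 \<notin> X"
    and mac: "module.span smul {lf NB p | p. p \<in> M \<and> p \<noteq> 0} = module.span smul (lf NB ` X)"
    using assms(5) unfolding macaulay_basis_def by auto
  have subM: "module.subspace smul M" by (rule assms(4))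
  let ?Y = "lf NB ` X"
  let ?Y' = "lf NB' ` X"
  have finY: "finite ?Y" using finX by simp
  have "\<forall>v\<in>?Y. \<exists>x. x \<in> X \<and> v = lf NB x" by blast
  then obtain xv where xv: "\<forall>v\<in>?Y. xv v \<in> X \<and> v = lf NB (xv v)" by (rule bchoice[THEN exE]) blast

  have key: "\<forall>p. p \<in> M \<longrightarrow> p \<noteq> 0 \<longrightarrow> gdeg NB p = d \<longrightarrow> comp NB' p (g d) \<in> module.span smul ?Y'" for d
  proof (induction d rule: less_induct)
    case (less d)
    show ?case
    proof (intro allI impI)
      fix p assume pM: "p \<in> M" and p0: "p \<noteq> 0" and pd: "gdeg NB p = d"
      have "lf NB p \<in> module.span smul ?Y"
        using mac pM p0 module.span_base[OF mod, of "lf NB p" "{lf NB p | p. p \<in> M \<and> p \<noteq> 0}"] by auto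
      then obtain u where u: "lf NB p = (\<Sum>v\<in>?Y. smul (u v) v)"
        using module.span_finite[OF mod finY] by auto
      define A where "A v = {a. comp RA (u v) a \<noteq> 0 \<and> act a (gdeg NB (xv v)) = d}" for v
      have finA: "finite (A v)" for v unfolding A_def
        by (rule finite_subset[OF _ comp_props(1)[OF dRA, of "u v"]]) auto
      define q where "q = (\<Sum>v\<in>?Y. \<Sum>a\<in>A v. smul (comp RA (u v) a) (xv v))"
      have qM: "q \<in> M" unfolding q_def
        using xv XM by (intro module.subspace_sum[OF mod subM] module.subspace_scale[OF mod subM]) auto
      have cq: "comp NB q k = (\<Sum>v\<in>?Y. \<Sum>a\<in>A v. comp NB (smul (comp RA (u v) a) (xv v)) k)" for k
        unfolding q_def by (simp add: comp_sum[OF dNB finY] comp_sum[OF dNB finA])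
      have cq': "comp NB' q k = (\<Sum>v\<in>?Y. \<Sum>a\<in>A v. comp NB' (smul (comp RA (u v) a) (xv v)) k)" for k
        unfolding q_def by (simp add: comp_sum[OF dNB' finY] comp_sum[OF dNB' finA])
      have lfd: "lf NB p = comp NB p d" unfolding lf_def pd ..
      have "comp NB q d = (\<Sum>v\<in>?Y. \<Sum>a\<in>A v. smul (comp RA (u v) a) v)"
        unfolding cq
      proof (intro sum.cong refl)
        fix v a assume v: "v \<in> ?Y" and a: "a \<in> A v"
        have "comp NB (smul (comp RA (u v) a) (xv v)) (act a (gdeg NB (xv v)))
              = smul (comp RA (u v) a) (comp NB (xv v) (gdeg NB (xv v)))"
          by (rule comp_smul[OF mod dNB hom canc comp_props(2)[OF dRA]])
        thus "comp NB (smul (comp RA (u v) a) (xv v)) d = smul (comp RA (u v) a) v"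
          using a xv v unfolding A_def lf_def by auto
      qed
      also have "\<dots> = comp NB (lf NB p) d"
      proof -
        have "comp NB (lf NB p) d = (\<Sum>v\<in>?Y. comp NB (smul (u v) v) d)"
          unfolding u by (rule comp_sum[OF dNB finY])
        also have "\<dots> = (\<Sum>v\<in>?Y. \<Sum>a\<in>A v. smul (comp RA (u v) a) v)"
        proof (rule sum.cong[OF refl])
          fix v assume v: "v \<in> ?Y"
          have "v \<in> NB (gdeg NB (xv v))" using xv v comp_props(2)[OF dNB] unfolding lf_def by metis
          thus "comp NB (smul (u v) v) d = (\<Sum>a\<in>A v. smul (comp RA (u v) a) v)"
            unfolding A_def by (rule comp_smul_hom[OF mod dNB dRA hom])
        qed
        finally show ?thesis by simp
      qed
      also have "\<dots> = lf NB p"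
        using comp_hom[OF dNB, of "lf NB p" d] comp_props(2)[OF dNB, of p d] lfd by simp
      finally have cqd: "comp NB q d = comp NB p d" using lfd by simp
      have cqk: "comp NB q k = 0" if k: "d < k" for k
        unfolding cq
      proof (rule sum.neutral, rule ballI)
        fix v assume v: "v \<in> ?Y"
        show "(\<Sum>a\<in>A v. comp NB (smul (comp RA (u v) a) (xv v)) k) = 0"
        proof (rule sum.neutral, rule ballI)
          fix a assume a: "a \<in> A v"
          have ad: "act a (gdeg NB (xv v)) = d" using a unfolding A_def by simp
          show "comp NB (smul (comp RA (u v) a) (xv v)) k = 0"
          proof (cases "k \<in> range (act a)")
            case True
            then obtain j where j: "k = act a j" by auto
            have "\<not> j \<le> gdeg NB (xv v)" using monob ad j k by (metis leD)
            hence "comp NB (xv v) j = 0" using gdeg_ge[OF dNB] by blast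
            thus ?thesis using j comp_smul[OF mod dNB hom canc comp_props(2)[OF dRA]]
              module.scale_zero_right[OF mod] by metis
          next
            case False
            thus ?thesis by (rule comp_smul_out[OF mod dNB hom comp_props(2)[OF dRA]])
          qed
        qed
      qed
      have cq'd: "comp NB' q (g d) \<in> module.span smul ?Y'"
        unfolding cq'
      proof (intro module.span_sum[OF mod])
        fix v a assume v: "v \<in> ?Y" and a: "a \<in> A v"
        let ?x = "xv v"
        have x0: "?x \<noteq> 0" and xX: "?x \<in> X" using xv v X0 by auto
        have ad: "act a (gdeg NB ?x) = d" using a unfolding A_def by simp
        have gd: "g d = act' (f a) (g (gdeg NB ?x))" using compat ad by simp
        have "comp NB' (smul (comp RA (u v) a) ?x) (g d) = smul (comp RA (u v) a) (comp NB' ?x (g (gdeg NB ?x)))"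
          unfolding gd by (rule comp_smul[OF mod dNB' hom' canc' RAsub[OF comp_props(2)[OF dRA]]])
        also have "\<dots> = smul (comp RA (u v) a) (lf NB' ?x)"
          using refine_lf[OF dNB dNB' refNB mg x0] by simp
        finally show "comp NB' (smul (comp RA (u v) a) ?x) (g d) \<in> module.span smul ?Y'"
          using xX by (simp add: module.span_scale[OF mod] module.span_base[OF mod])
      qed
      define p' where "p' = p - q"
      have p'M: "p' \<in> M" unfolding p'_def by (rule module.subspace_diff[OF mod subM pM qM])
      have p'k: "comp NB p' k = 0" if "d \<le> k" for k
      proof (cases "k = d")
        case True thus ?thesis unfolding p'_def comp_diff[OF dNB] using cqd by simp
      next
        case False
        hence dk: "d < k" using that by simp
        have "comp NB p k = 0" using gdeg_ge[OF dNB, of p k] pd dk by fastforce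
        thus ?thesis unfolding p'_def comp_diff[OF dNB] using cqk[OF dk] by simp
      qed
      have cp': "comp NB' p' (g d) \<in> module.span smul ?Y'"
      proof (cases "comp NB' p' (g d) = 0")
        case True thus ?thesis by (simp add: module.span_zero[OF mod])
      next
        case False
        hence p'0: "p' \<noteq> 0" using comp_zero[OF dNB'] by auto
        let ?d' = "gdeg NB p'"
        have "\<not> d \<le> ?d'" using p'k gdeg_nz[OF dNB p'0] by blast
        hence lt: "?d' < d" by simp
        have "g d \<le> g ?d'" by (rule refine_le[OF dNB dNB' refNB mg False])
        moreover have "g ?d' \<le> g d" using mg lt by (simp add: monoD)
        ultimately have eq: "g ?d' = g d" by simp
        show ?thesis using less[OF lt] p'M p'0 eq by auto
      qed
      have "p = p' + q" unfolding p'_def by simp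
      hence "comp NB' p (g d) = comp NB' p' (g d) + comp NB' q (g d)"
        using comp_add[OF dNB'] by metis
      thus "comp NB' p (g d) \<in> module.span smul ?Y'"
        using cp' cq'd module.span_add[OF mod] by metis
    qed
  qed
  have "module.span smul {lf NB' p | p. p \<in> M \<and> p \<noteq> 0} = module.span smul ?Y'"
  proof
    show "module.span smul {lf NB' p | p. p \<in> M \<and> p \<noteq> 0} \<subseteq> module.span smul ?Y'"
    proof (rule module.span_minimal[OF mod])
      show "module.subspace smul (module.span smul ?Y')" by (rule module.subspace_span[OF mod])
      show "{lf NB' p | p. p \<in> M \<and> p \<noteq> 0} \<subseteq> module.span smul ?Y'"
      proof
        fix y assume "y \<in> {lf NB' p | p. p \<in> M \<and> p \<noteq> 0}"
        then obtain p where y: "y = lf NB' p" and pM: "p \<in> M" and p0: "p \<noteq> 0" by blast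
        show "y \<in> module.span smul ?Y'"
          unfolding y refine_lf[OF dNB dNB' refNB mg p0] using key pM p0 by blast
      qed
    qed
    show "module.span smul ?Y' \<subseteq> module.span smul {lf NB' p | p. p \<in> M \<and> p \<noteq> 0}"
      using XM X0 by (intro module.span_mono[OF mod]) blast
  qed
  thus ?thesis unfolding macaulay_basis_def using finX XM X0 by simp
qed

end
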